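(* Let $n\geq 2$ be an integer, let $\mathcal{F}=(W,R)$ be a finite transitive frame and let $X_\mathcal{F}$ be constructed as described in the context. If $X_C$ is hereditarily $n$-irresolvable for every cluster $C$ of $\mathcal{F}$, then $X_\mathcal{F}$ is hereditarily $n$-irresolvable.
   Context: A space $X$ is $k$-resolvable ($k\ge 2$) if it has $k$ pairwise disjoint non-empty dense subsets, $k$-irresolvable otherwise, and hereditarily $k$-irresolvable if every non-empty subspace is $k$-irresolvable. For $Y\subseteq X$, $\mathrm{d}_XY$ is the set of limit points of $Y$; $S$ is crowded in $X$ if $S\subseteq\mathrm{d}_XS$. A partition is dense (resp. crowded) if all its cells are dense (resp. crowded). For a transitive frame $(W,R)$: clusters are equivalence classes of $\{(x,y):x=y\text{ or }xRyRx\}$; the cluster of $x$ is degenerate if $x$ is irreflexive (then it is $\{x\}$), non-degenerate otherwise; $CRC'$ for clusters iff $xRy$ for representatives; $CR^\uparrow C'$ means $CRC'$ and not $C'RC$. Construction of $X_\mathcal{F}$: let $\mathscr{C}$ be the set of clusters of the finite transitive frame $\mathcal{F}$. For each $C\in\mathscr{C}$ choose a space $X_C$ with a partition $\{X_w:w\in C\}$: if $C=\{w\}$ is degenerate, $X_C=X_w=\{w\}$; if $C=\{w_1,\dots,w_k\}$ is non-degenerate, $X_C$ is a space with a crowded dense $k$-partition with cells labelled $X_{w_1},\dots,X_{w_k}$. The $X_C$ are pairwise disjoint. $X_\mathcal{F}=\bigcup_{C}X_C$, where $O\subseteq X_\mathcal{F}$ is open iff for every $C$, $O\cap X_C$ is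 open in $X_C$, and if $O\cap X_C\ne\emptyset$ then $X_{C'}\subseteq O$ for all $C'$ with $CR^\uparrow C'$. *)

theory Defs
  imports "HOL-Analysis.Analysis"
begin

definition dense_in :: "'a topology \<Rightarrow> 'a set \<Rightarrow> bool" where
  "dense_in X D \<longleftrightarrow> D \<subseteq> topspace X \<and> X closure_of D = topspace X"

definition crowded_in :: "'a topology \<Rightarrow> 'a set \<Rightarrow> bool" where
  "crowded_in X S \<longleftrightarrow> S \<subseteq> X derived_set_of S"

definition resolvable :: "nat \<Rightarrow> 'a topology \<Rightarrow> bool" where
  "resolvable k X \<longleftrightarrow>
     (\<exists>D :: nat \<Rightarrow> 'a set. (\<forall>i<k. D i \<noteq> {} \<and> dense_in X (D i)) \<and> disjoint_family_on D {..<k})"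

definition hered_irresolvable :: "nat \<Rightarrow> 'a topology \<Rightarrow> bool" where
  "hered_irresolvable k X \<longleftrightarrow>
     (\<forall>Y. Y \<subseteq> topspace X \<and> Y \<noteq> {} \<longrightarrow> \<not> resolvable k (subtopology X Y))"

definition frame :: "'w set \<Rightarrow> ('w \<Rightarrow> 'w \<Rightarrow> bool) \<Rightarrow> bool" where
  "frame W R \<longleftrightarrow> (\<forall>x y. R x y \<longrightarrow> x \<in> W \<and> y \<in> W)"

definition transitive_on :: "'w set \<Rightarrow> ('w \<Rightarrow> 'w \<Rightarrow> bool) \<Rightarrow> bool" where
  "transitive_on W R \<longleftrightarrow> (\<forall>x\<in>W. \<forall>y\<in>W. \<forall>z\<in>W. R x y \<longrightarrow> R y z \<longrightarrow> R x z)"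

definition cluster_rel :: "'w set \<Rightarrow> ('w \<Rightarrow> 'w \<Rightarrow> bool) \<Rightarrow> ('w \<times> 'w) set" where
  "cluster_rel W R = {(x, y). x \<in> W \<and> y \<in> W \<and> (x = y \<or> (R x y \<and> R y x))}"

definition clusters :: "'w set \<Rightarrow> ('w \<Rightarrow> 'w \<Rightarrow> bool) \<Rightarrow> 'w set set" where
  "clusters W R = W // cluster_rel W R"

definition clR :: "('w \<Rightarrow> 'w \<Rightarrow> bool) \<Rightarrow> 'w set \<Rightarrow> 'w set \<Rightarrow> bool" where
  "clR R C C' \<longleftrightarrow> (\<exists>x\<in>C. \<exists>y\<in>C'. R x y)"

definition clR_up :: "('w \<Rightarrow> 'w \<Rightarrow> bool) \<Rightarrow> 'w set \<Rightarrow> 'w set \<Rightarrow> bool" where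
  "clR_up R C C' \<longleftrightarrow> clR R C C' \<and> \<not> clR R C' C"

definition degenerate :: "('w \<Rightarrow> 'w \<Rightarrow> bool) \<Rightarrow> 'w set \<Rightarrow> bool" where
  "degenerate R C \<longleftrightarrow> (\<exists>w. C = {w} \<and> \<not> R w w)"

text \<open>Given spaces XC C (for clusters C) whose points are labelled by lab (the point x lies
  in the cell X_(lab x)), the admissible family for the construction.\<close>
definition admissible_family ::
  "'w set \<Rightarrow> ('w \<Rightarrow> 'w \<Rightarrow> bool) \<Rightarrow> ('w set \<Rightarrow> 'a topology) \<Rightarrow> ('a \<Rightarrow> 'w) \<Rightarrow> bool" where
  "admissible_family W R XC lab \<longleftrightarrow>
     (\<forall>C\<in>clusters W R. (\<forall>x\<in>topspace (XC C). lab x \<in> C) \<and>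
        (if degenerate R C then (\<exists>a. topspace (XC C) = {a})
         else (\<forall>w\<in>C. {x \<in> topspace (XC C). lab x = w} \<noteq> {} \<and>
                      dense_in (XC C) {x \<in> topspace (XC C). lab x = w} \<and>
                      crowded_in (XC C) {x \<in> topspace (XC C). lab x = w})))"

definition XF :: "'w set \<Rightarrow> ('w \<Rightarrow> 'w \<Rightarrow> bool) \<Rightarrow> ('w set \<Rightarrow> 'a topology) \<Rightarrow> 'a topology" where
  "XF W R XC = topology (\<lambda>U. U \<subseteq> (\<Union>C\<in>clusters W R. topspace (XC C)) \<and>
      (\<forall>C\<in>clusters W R. openin (XC C) (U \<inter> topspace (XC C)) \<and>
         (U \<inter> topspace (XC C) \<noteq> {} \<longrightarrow>
            (\<forall>C'\<in>clusters W R. clR_up R C C' \<longrightarrow> topspace (XC C') \<subseteq> U))))"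

end

theory Submission
  imports Defs
begin

lemma dense_open_restrict:
  assumes "openin T Z" "Z \<noteq> {}" "dense_in T D"
  shows "D \<inter> Z \<noteq> {} \<and> dense_in (subtopology T Z) (D \<inter> Z)"
proof -
  have Zs: "Z \<subseteq> topspace T" using assms(1) openin_subset by blast
  have cl: "T closure_of D = topspace T" using assms(3) by (simp add: dense_in_def)
  have e: "Z \<inter> T closure_of D = Z \<inter> T closure_of (Z \<inter> D)"
    using openin_Int_closure_of_eq[OF assms(1)] by blast
  hence e2: "Z \<inter> T closure_of (Z \<inter> D) = Z" using cl Zs by auto
  have "subtopology T Z closure_of (D \<inter> Z) = Z"
    using e2 by (simp add: closure_of_subtopology Int_commute Int_left_commute)
  moreover have "D \<inter> Z \<noteq> {}"
  proof
    assume "D \<inter> Z = {}"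
    hence "Z \<inter> D = {}" by blast
    with e2 assms(2) show False by simp
  qed
  ultimately show ?thesis using Zs
    by (auto simp: dense_in_def topspace_subtopology)
qed

lemma resolvable_open_sub:
  assumes "resolvable n (subtopology X Y)" "openin (subtopology X Y) Z" "Z \<noteq> {}"
  shows "resolvable n (subtopology X Z)"
proof -
  obtain D where D: "\<forall>i<n. D i \<noteq> {} \<and> dense_in (subtopology X Y) (D i)"
    "disjoint_family_on D {..<n}"
    using assms(1) unfolding resolvable_def by blast
  have ZY: "Z \<subseteq> Y" using openin_subset[OF assms(2)] by (auto simp: topspace_subtopology)
  have st: "subtopology (subtopology X Y) Z = subtopology X Z"
    using ZY by (simp add: subtopology_subtopology Int_absorb1)
  show ?thesis unfolding resolvable_def
  proof (intro exI[of _ "\<lambda>i. D i \<inter> Z"] conjI allI impI)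
    fix i assume "i < n"
    then show "D i \<inter> Z \<noteq> {}" "dense_in (subtopology X Z) (D i \<inter> Z)"
      using dense_open_restrict[OF assms(2,3), of "D i"] D(1) st by auto
  next
    show "disjoint_family_on (\<lambda>i. D i \<inter> Z) {..<n}"
      using D(2) unfolding disjoint_family_on_def by blast
  qed
qed

context
  fixes W :: "'w set" and R :: "'w \<Rightarrow> 'w \<Rightarrow> bool"
    and XC :: "'w set \<Rightarrow> 'a topology" and lab :: "'a \<Rightarrow> 'w"
  assumes fr: "frame W R" and tr: "transitive_on W R"
    and adm: "admissible_family W R XC lab"
begin

lemma equiv_cl: "equiv W (cluster_rel W R)"
  unfolding equiv_def refl_on_def sym_def trans_def cluster_rel_def
  using tr unfolding transitive_on_def by blast

lemma cl_mem:
  assumes "C \<in> clusters W R" "x \<in> C" "y \<in> C"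
  shows "x \<in> W \<and> y \<in> W \<and> (x = y \<or> (R x y \<and> R y x))"
proof -
  from assms(1) obtain a where a: "a \<in> W" "C = cluster_rel W R `` {a}"
    unfolding clusters_def quotient_def by blast
  then show ?thesis using assms(2,3) tr unfolding cluster_rel_def transitive_on_def by blast
qed

lemma cl_sub: "C \<in> clusters W R \<Longrightarrow> C \<subseteq> W"
  using cl_mem by blast

lemma clR_up_trans:
  assumes "C1 \<in> clusters W R" "C2 \<in> clusters W R" "C3 \<in> clusters W R"
    "clR_up R C1 C2" "clR_up R C2 C3"
  shows "clR_up R C1 C3"
proof -
  have RT: "\<And>x y z. R x y \<Longrightarrow> R y z \<Longrightarrow> R x z"
    using tr fr unfolding transitive_on_def frame_def by blast
  obtain x y where xy: "x \<in> C1" "y \<in> C2" "R x y" using assms(4) unfolding clR_up_def clR_def by blast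
  obtain y' z where yz: "y' \<in> C2" "z \<in> C3" "R y' z" using assms(5) unfolding clR_up_def clR_def by blast
  have "y = y' \<or> (R y y' \<and> R y' y)" using cl_mem[OF assms(2) xy(2) yz(1)] by blast
  hence Rxz: "R x z" using xy yz RT by metis
  have "\<not> clR R C3 C1"
  proof
    assume "clR R C3 C1"
    then obtain z' x' where "z' \<in> C3" "x' \<in> C1" "R z' x'" unfolding clR_def by blast
    moreover have "z' = z \<or> (R z' z \<and> R z z')" using cl_mem[OF assms(3) yz(2)] \<open>z' \<in> C3\<close> by blast
    ultimately have "R y' x'" using yz RT by metis
    hence "clR R C2 C1" using yz(1) \<open>x' \<in> C1\<close> unfolding clR_def by blast
    thus False using assms(4) unfolding clR_up_def by blast
  qed
  thus ?thesis using Rxz xy yz unfolding clR_up_def clR_def by blast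
qed

lemma lab_in: "C \<in> clusters W R \<Longrightarrow> x \<in> topspace (XC C) \<Longrightarrow> lab x \<in> C"
  using adm unfolding admissible_family_def by blast

lemma disj_X:
  assumes "C \<in> clusters W R" "C' \<in> clusters W R" "x \<in> topspace (XC C)" "x \<in> topspace (XC C')"
  shows "C = C'"
proof -
  have "lab x \<in> C \<inter> C'" using lab_in assms by blast
  thus ?thesis using quotient_disj[OF equiv_cl] assms(1,2) unfolding clusters_def by blast
qed

definition PF where
  "PF U \<longleftrightarrow> U \<subseteq> (\<Union>C\<in>clusters W R. topspace (XC C)) \<and>
      (\<forall>C\<in>clusters W R. openin (XC C) (U \<inter> topspace (XC C)) \<and>
         (U \<inter> topspace (XC C) \<noteq> {} \<longrightarrow>
            (\<forall>C'\<in>clusters W R. clR_up R C C' \<longrightarrow> topspace (XC C') \<subseteq> U)))"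

lemma isto: "istopology PF"
  unfolding istopology_def
proof (intro conjI allI impI)
  fix S T assume PS: "PF S" and PT: "PF T"
  show "PF (S \<inter> T)" unfolding PF_def
  proof (intro conjI ballI impI)
    show "S \<inter> T \<subseteq> (\<Union>C\<in>clusters W R. topspace (XC C))" using PS unfolding PF_def by blast
  next
    fix C assume C: "C \<in> clusters W R"
    have e: "S \<inter> T \<inter> topspace (XC C) = (S \<inter> topspace (XC C)) \<inter> (T \<inter> topspace (XC C))" by blast
    have "openin (XC C) (S \<inter> topspace (XC C))" "openin (XC C) (T \<inter> topspace (XC C))"
      using PS PT C unfolding PF_def by blast+
    then show "openin (XC C) (S \<inter> T \<inter> topspace (XC C))"
      unfolding e by (rule openin_Int)
  next
    fix C C' assume C: "C \<in> clusters W R"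
      and ne: "S \<inter> T \<inter> topspace (XC C) \<noteq> {}" and C': "C' \<in> clusters W R" "clR_up R C C'"
    have "S \<inter> topspace (XC C) \<noteq> {}" "T \<inter> topspace (XC C) \<noteq> {}" using ne by blast+
    then show "topspace (XC C') \<subseteq> S \<inter> T" using PS PT C C' unfolding PF_def by blast
  qed
next
  fix K assume K: "\<forall>S\<in>K. PF S"
  show "PF (\<Union>K)" unfolding PF_def
  proof (intro conjI ballI impI)
    show "\<Union>K \<subseteq> (\<Union>C\<in>clusters W R. topspace (XC C))" using K unfolding PF_def by blast
  next
    fix C assume C: "C \<in> clusters W R"
    have "\<Union>K \<inter> topspace (XC C) = (\<Union>S\<in>K. S \<inter> topspace (XC C))" by blast
    moreover have "openin (XC C) (\<Union>S\<in>K. S \<inter> topspace (XC C))"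
      using K C unfolding PF_def by blast
    ultimately show "openin (XC C) (\<Union>K \<inter> topspace (XC C))" by simp
    fix C' assume "\<Union>K \<inter> topspace (XC C) \<noteq> {}" "C' \<in> clusters W R" "clR_up R C C'"
    then obtain S where "S \<in> K" "S \<inter> topspace (XC C) \<noteq> {}" by blast
    then show "topspace (XC C') \<subseteq> \<Union>K" using K C \<open>C' \<in> clusters W R\<close> \<open>clR_up R C C'\<close>
      unfolding PF_def by blast
  qed
qed

lemma XF_eq: "XF W R XC = topology PF"
  unfolding XF_def PF_def by simp

lemma openin_XF: "openin (XF W R XC) U \<longleftrightarrow> PF U"
  using isto XF_eq by simp

lemma up_open:
  assumes C: "C \<in> clusters W R" and V: "openin (XC C) V"
  shows "openin (XF W R XC) (V \<union> (\<Union>C'\<in>{C'\<in>clusters W R. clR_up R C C'}. topspace (XC C')))"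
    (is "openin _ ?U")
  unfolding openin_XF PF_def
proof (intro conjI ballI impI)
  show "?U \<subseteq> (\<Union>C\<in>clusters W R. topspace (XC C))" using C openin_subset[OF V] by blast
next
  fix D assume D: "D \<in> clusters W R"
  show "openin (XC D) (?U \<inter> topspace (XC D))"
  proof (cases "D = C")
    case True
    have "?U \<inter> topspace (XC D) = V"
    proof -
      have "\<And>C'. C' \<in> clusters W R \<Longrightarrow> clR_up R C C' \<Longrightarrow> topspace (XC C') \<inter> topspace (XC C) = {}"
        using disj_X C unfolding clR_up_def by blast
      then show ?thesis using True openin_subset[OF V] by blast
    qed
    then show ?thesis using V True by simp
  next
    case False
    have VD: "V \<inter> topspace (XC D) = {}" using disj_X[OF C D] openin_subset[OF V] False by blast
    show ?thesis
    proof (cases "clR_up R C D")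
      case True
      then have "?U \<inter> topspace (XC D) = topspace (XC D)" using D by blast
      then show ?thesis by simp
    next
      case f2: False
      have "\<forall>C'\<in>clusters W R. clR_up R C C' \<longrightarrow> topspace (XC C') \<inter> topspace (XC D) = {}"
      proof (intro ballI impI)
        fix C' assume "C' \<in> clusters W R" "clR_up R C C'"
        then have "C' \<noteq> D" using f2 by blast
        then show "topspace (XC C') \<inter> topspace (XC D) = {}"
          using disj_X[OF \<open>C' \<in> clusters W R\<close> D] by blast
      qed
      then have "?U \<inter> topspace (XC D) = {}"
        using VD by blast
      then show ?thesis by simp
    qed
  qed
next
  fix D D' assume D: "D \<in> clusters W R" and ne: "?U \<inter> topspace (XC D) \<noteq> {}"
    and D': "D' \<in> clusters W R" and up: "clR_up R D D'"
  obtain x where x: "x \<in> ?U" "x \<in> topspace (XC D)" using ne by blast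
  have "D = C \<or> clR_up R C D"
  proof (cases "x \<in> V")
    case True
    then show ?thesis using disj_X[OF C D] openin_subset[OF V] x by blast
  next
    case False
    then obtain C' where "C' \<in> clusters W R" "clR_up R C C'" "x \<in> topspace (XC C')" using x by blast
    then show ?thesis using disj_X[OF \<open>C' \<in> clusters W R\<close> D] x by blast
  qed
  then have "clR_up R C D'" using clR_up_trans[OF C D D'] up by blast
  then show "topspace (XC D') \<subseteq> ?U" using D' by blast
qed

lemma sub_XF: assumes C: "C \<in> clusters W R"
  shows "subtopology (XF W R XC) (topspace (XC C)) = XC C"
  unfolding topology_eq openin_subtopology
proof (intro allI iffI)
  fix S assume "\<exists>T. openin (XF W R XC) T \<and> S = T \<inter> topspace (XC C)"
  then obtain T where T: "openin (XF W R XC) T" "S = T \<inter> topspace (XC C)" by blast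
  then have "PF T" using openin_XF by blast
  then show "openin (XC C) S" using C T(2) unfolding PF_def by blast
next
  fix S assume S: "openin (XC C) S"
  let ?U = "S \<union> (\<Union>C'\<in>{C'\<in>clusters W R. clR_up R C C'}. topspace (XC C'))"
  have "?U \<inter> topspace (XC C) = S"
  proof -
    have "\<And>C'. C' \<in> clusters W R \<Longrightarrow> clR_up R C C' \<Longrightarrow> topspace (XC C') \<inter> topspace (XC C) = {}"
      using disj_X C unfolding clR_up_def by blast
    then show ?thesis using openin_subset[OF S] by blast
  qed
  then show "\<exists>T. openin (XF W R XC) T \<and> S = T \<inter> topspace (XC C)"
    using up_open[OF C S] by blast
qed

lemma topspace_XF: "topspace (XF W R XC) = (\<Union>C\<in>clusters W R. topspace (XC C))"
proof -
  have "PF (\<Union>C\<in>clusters W R. topspace (XC C))" unfolding PF_def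
  proof (intro conjI ballI impI)
    fix C assume C: "C \<in> clusters W R"
    have "(\<Union>C\<in>clusters W R. topspace (XC C)) \<inter> topspace (XC C) = topspace (XC C)" using C by blast
    then show "openin (XC C) ((\<Union>C\<in>clusters W R. topspace (XC C)) \<inter> topspace (XC C))" by simp
  next
    fix C C' assume "C' \<in> clusters W R"
    then show "topspace (XC C') \<subseteq> (\<Union>C\<in>clusters W R. topspace (XC C))" by blast
  qed simp
  hence "openin (XF W R XC) (\<Union>C\<in>clusters W R. topspace (XC C))" using openin_XF by blast
  hence "(\<Union>C\<in>clusters W R. topspace (XC C)) \<subseteq> topspace (XF W R XC)" using openin_subset by blast
  moreover have "topspace (XF W R XC) \<subseteq> (\<Union>C\<in>clusters W R. topspace (XC C))"
    using openin_XF[of "topspace (XF W R XC)"] unfolding PF_def by simp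
  ultimately show ?thesis by blast
qed

end

theorem lemma5:
  fixes n :: nat and W :: "'w set" and R :: "'w \<Rightarrow> 'w \<Rightarrow> bool"
    and XC :: "'w set \<Rightarrow> 'a topology" and lab :: "'a \<Rightarrow> 'w"
  assumes "n \<ge> 2"
    and "finite W" and "frame W R" and "transitive_on W R"
    and "admissible_family W R XC lab"
    and "\<forall>C\<in>clusters W R. hered_irresolvable n (XC C)"
  shows "hered_irresolvable n (XF W R XC)"
  unfolding hered_irresolvable_def
proof (intro allI impI notI)
  note fr = assms(3) and tr = assms(4) and adm = assms(5)
  fix Y assume Y: "Y \<subseteq> topspace (XF W R XC) \<and> Y \<noteq> {}" and res: "resolvable n (subtopology (XF W R XC) Y)"
  define S where "S = {C \<in> clusters W R. Y \<inter> topspace (XC C) \<noteq> {}}"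
  have SnE: "S \<noteq> {}" using Y topspace_XF[OF fr tr adm] unfolding S_def by blast
  have finCl: "finite (clusters W R)"
  proof -
    have "clusters W R \<subseteq> Pow W" using cl_sub[OF fr tr adm] by blast
    then show ?thesis by (rule finite_subset) (simp add: assms(2))
  qed
  define r where "r = {(C', C). C \<in> S \<and> C' \<in> S \<and> clR_up R C C'}"
  have "r \<subseteq> clusters W R \<times> clusters W R" unfolding r_def S_def by blast
  hence finr: "finite r" using finCl finite_subset by blast
  have transr: "trans r" unfolding trans_def r_def S_def using clR_up_trans[OF fr tr adm] by blast
  have "irrefl r" unfolding irrefl_def r_def clR_up_def by blast
  hence "acyclic r" unfolding acyclic_irrefl trancl_id[OF transr] .
  hence "wf r" using finite_acyclic_wf finr by blast
  then obtain C where C: "C \<in> S" and max: "\<And>C'. (C', C) \<in> r \<Longrightarrow> C' \<notin> S"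
    using SnE unfolding wf_eq_minimal by blast
  have Ccl: "C \<in> clusters W R" using C S_def by blast
  let ?U = "{} \<union> (\<Union>C'\<in>{C'\<in>clusters W R. clR_up R C C'}. topspace (XC C'))"
  let ?U2 = "topspace (XC C) \<union> (\<Union>C'\<in>{C'\<in>clusters W R. clR_up R C C'}. topspace (XC C'))"
  have oU: "openin (XF W R XC) ?U2" using up_open[OF fr tr adm Ccl openin_topspace] .
  have eqZ: "?U2 \<inter> Y = Y \<inter> topspace (XC C)"
  proof -
    have "\<And>C'. C' \<in> clusters W R \<Longrightarrow> clR_up R C C' \<Longrightarrow> Y \<inter> topspace (XC C') = {}"
      using max C unfolding r_def S_def by blast
    then show ?thesis by blast
  qed
  have oZ: "openin (subtopology (XF W R XC) Y) (Y \<inter> topspace (XC C))"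
    unfolding openin_subtopology using oU eqZ by blast
  have ZnE: "Y \<inter> topspace (XC C) \<noteq> {}" using C S_def by blast
  have "resolvable n (subtopology (XF W R XC) (Y \<inter> topspace (XC C)))"
    using resolvable_open_sub[OF res oZ ZnE] .
  moreover have "subtopology (XF W R XC) (Y \<inter> topspace (XC C)) = subtopology (XC C) (Y \<inter> topspace (XC C))"
  proof -
    have "topspace (XC C) \<inter> (Y \<inter> topspace (XC C)) = Y \<inter> topspace (XC C)" by blast
    then have "subtopology (subtopology (XF W R XC) (topspace (XC C))) (Y \<inter> topspace (XC C))
       = subtopology (XF W R XC) (Y \<inter> topspace (XC C))" by (simp add: subtopology_subtopology)
    then show ?thesis using sub_XF[OF fr tr adm Ccl] by simp
  qed
  ultimately have "resolvable n (subtopology (XC C) (Y \<inter> topspace (XC C)))" by simp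
  moreover have "hered_irresolvable n (XC C)" using assms(6) Ccl by blast
  ultimately show False using ZnE unfolding hered_irresolvable_def by blast
qed

end
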